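(* For all $n\ge1$ and all $\vec p,\vec q\in[0,1]^n$, with $\bar p=\frac1n\sum_{i=1}^np_i$ and $\bar q=\frac1n\sum_{i=1}^nq_i$, $$\mathrm{TV}(\mathrm{Ber}(\vec p),\mathrm{Ber}(\vec q))\ge c\,\mathrm{TV}\big(\mathrm{Bin}(n,\bar p),\mathrm{Bin}(n,\bar q)\big),$$ where $c\ge\frac1{48C_{\mathrm{BCV}}}$ is a universal constant (in particular the inequality holds with $c=\frac1{48C_{\mathrm{BCV}}}\approx0.017$).
   Context: $\mathrm{Ber}(\vec r)=\mathrm{Ber}(r_1)\otimes\cdots\otimes\mathrm{Ber}(r_n)$ is the product Bernoulli measure on $\{0,1\}^n$; $\mathrm{Bin}(n,\theta)$ is the binomial distribution; $\mathrm{TV}(P,Q)=\frac12\sum_\omega|P(\omega)-Q(\omega)|$. $\eta_{\mathrm{BCV}}$ is the sharp Baillon–Cominetti–Vaisman constant: the smallest constant such that every finite sum $Z$ of independent Bernoulli random variables with $\mathrm{Var}(Z)>0$ satisfies $\max_k\mathbb P(Z=k)\le\eta_{\mathrm{BCV}}/\sqrt{\mathrm{Var}(Z)}$ ($\eta_{\mathrm{BCV}}\approx0.4688$). $C_{\mathrm{BCV}}=\sqrt{5/4+\eta_{\mathrm{BCV}}^2}\approx1.2124$. *)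

theory Defs
  imports Complex_Main
begin

text \<open>Product Bernoulli measure Ber(r_1,...,r_n) on {0,1}^n; a point x of {0,1}^n is
  encoded by its support S = {i. x_i = 1}, a subset of {0..<n}.\<close>
definition ber_prod :: "nat \<Rightarrow> (nat \<Rightarrow> real) \<Rightarrow> nat set \<Rightarrow> real" where
  "ber_prod n r S = (\<Prod>i\<in>S. r i) * (\<Prod>i\<in>{..<n} - S. 1 - r i)"

definition tv_ber :: "nat \<Rightarrow> (nat \<Rightarrow> real) \<Rightarrow> (nat \<Rightarrow> real) \<Rightarrow> real" where
  "tv_ber n p q = (1/2) * (\<Sum>S\<in>Pow {..<n}. \<bar>ber_prod n p S - ber_prod n q S\<bar>)"

definition bin_pmf :: "nat \<Rightarrow> real \<Rightarrow> nat \<Rightarrow> real" where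
  "bin_pmf n \<theta> k = real (n choose k) * \<theta> ^ k * (1 - \<theta>) ^ (n - k)"

definition tv_bin :: "nat \<Rightarrow> real \<Rightarrow> real \<Rightarrow> real" where
  "tv_bin n a b = (1/2) * (\<Sum>k\<le>n. \<bar>bin_pmf n a k - bin_pmf n b k\<bar>)"

definition poibin_pmf :: "nat \<Rightarrow> (nat \<Rightarrow> real) \<Rightarrow> nat \<Rightarrow> real" where
  "poibin_pmf m r k = (\<Sum>S\<in>{S. S \<subseteq> {..<m} \<and> card S = k}. ber_prod m r S)"

definition poibin_var :: "nat \<Rightarrow> (nat \<Rightarrow> real) \<Rightarrow> real" where
  "poibin_var m r = (\<Sum>i<m. r i * (1 - r i))"

definition bcv_admissible :: "real \<Rightarrow> bool" where
  "bcv_admissible \<eta> \<longleftrightarrow>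
     (\<forall>m r. (\<forall>i<m. 0 \<le> r i \<and> r i \<le> 1) \<and> poibin_var m r > 0 \<longrightarrow>
        (\<forall>k. poibin_pmf m r k \<le> \<eta> / sqrt (poibin_var m r)))"

definition eta_BCV :: real where
  "eta_BCV = Inf {\<eta>. bcv_admissible \<eta>}"

definition C_BCV :: real where
  "C_BCV = sqrt (5/4 + eta_BCV ^ 2)"

end

theory Submission
  imports Defs "HOL-Analysis.Analysis"
begin


definition bp :: "nat set \<Rightarrow> (nat \<Rightarrow> real) \<Rightarrow> nat set \<Rightarrow> real" where
  "bp A r S = (\<Prod>i\<in>S. r i) * (\<Prod>i\<in>A - S. 1 - r i)"

lemma ber_prod_bp: "ber_prod n r S = bp {..<n} r S"
  by (simp add: ber_prod_def bp_def)

lemma pow_insert_sum: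
  assumes "finite A" "j \<notin> A"
  shows "(\<Sum>S\<in>Pow (insert j A). h S) = (\<Sum>S\<in>Pow A. h (insert j S) + h S)"
proof -
  have "(\<Sum>S\<in>Pow (insert j A). h S) = (\<Sum>S\<in>Pow A. h S) + (\<Sum>S\<in>insert j ` Pow A. h S)"
    unfolding Pow_insert by (rule sum.union_disjoint) (use assms in auto)
  also have "(\<Sum>S\<in>insert j ` Pow A. h S) = (\<Sum>S\<in>Pow A. h (insert j S))"
    by (subst sum.reindex) (use assms in \<open>auto intro!: inj_onI simp: o_def\<close>)
  finally show ?thesis by (simp add: sum.distrib add.commute)
qed

lemma sum_ins_sub:
  assumes "finite A" "j \<notin> A" "S \<subseteq> A"
  shows "sum w (insert j S) = w j + sum w S"
  using assms by (subst sum.insert) (auto intro: finite_subset)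

lemma bp_ins_in:
  assumes "finite A" "j \<notin> A" "S \<subseteq> A"
  shows "bp (insert j A) r (insert j S) = r j * bp A r S"
proof -
  have "insert j A - insert j S = A - S" using assms by auto
  moreover have "finite S" using assms finite_subset by blast
  moreover have "j \<notin> S" using assms by auto
  ultimately show ?thesis by (simp add: bp_def)
qed

lemma bp_ins_out:
  assumes "finite A" "j \<notin> A" "S \<subseteq> A"
  shows "bp (insert j A) r S = (1 - r j) * bp A r S"
proof -
  have "insert j A - S = insert j (A - S)" using assms by auto
  moreover have "j \<notin> A - S" using assms by auto
  ultimately show ?thesis using assms by (simp add: bp_def)
qed

lemma bp_sum1: "finite A \<Longrightarrow> (\<Sum>S\<in>Pow A. bp A r S) = 1"
  using prod_add[of A r "\<lambda>i. 1 - r i"] by (simp add: bp_def)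

lemma bp_nonneg: "(\<forall>i\<in>A. 0 \<le> r i \<and> r i \<le> 1) \<Longrightarrow> S \<subseteq> A \<Longrightarrow> 0 \<le> bp A r S"
  unfolding bp_def by (intro mult_nonneg_nonneg prod_nonneg) auto

lemma bp_cong: "(\<forall>i\<in>A. r i = r' i) \<Longrightarrow> S \<subseteq> A \<Longrightarrow> bp A r S = bp A r' S"
  unfolding bp_def by (intro arg_cong2[where f="(*)"] prod.cong) auto

lemma bp_mom1:
  assumes "finite A"
  shows "(\<Sum>S\<in>Pow A. bp A r S * (\<Sum>i\<in>S. w i)) = (\<Sum>i\<in>A. w i * r i)"
  using assms
proof (induction A rule: finite_induct)
  case empty then show ?case by (simp add: bp_def)
next
  case (insert j A)
  have "(\<Sum>S\<in>Pow (insert j A). bp (insert j A) r S * (\<Sum>i\<in>S. w i))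
     = (\<Sum>S\<in>Pow A. bp A r S * (\<Sum>i\<in>S. w i) + (w j * r j) * bp A r S)"
    using insert by (auto simp: pow_insert_sum bp_ins_in bp_ins_out sum_ins_sub algebra_simps
        intro!: sum.cong)
  also have "\<dots> = (\<Sum>i\<in>insert j A. w i * r i)"
    using insert by (simp add: sum.distrib bp_sum1 flip: sum_distrib_left)
  finally show ?case .
qed

lemma bp_mom2:
  assumes "finite A"
  shows "(\<Sum>S\<in>Pow A. bp A r S * (\<Sum>i\<in>S. w i)^2) = (\<Sum>i\<in>A. w i * r i)^2 + (\<Sum>i\<in>A. (w i)^2 * r i * (1 - r i))"
  using assms
proof (induction A rule: finite_induct)
  case empty then show ?case by (simp add: bp_def)
next
  case (insert j A)
  have "(\<Sum>S\<in>Pow (insert j A). bp (insert j A) r S * (\<Sum>i\<in>S. w i)^2)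
     = (\<Sum>S\<in>Pow A. bp A r S * (\<Sum>i\<in>S. w i)^2 + (2 * w j * r j) * (bp A r S * (\<Sum>i\<in>S. w i))
          + ((w j)^2 * r j) * bp A r S)"
    using insert by (auto simp: pow_insert_sum bp_ins_in bp_ins_out sum_ins_sub algebra_simps
        power2_eq_square intro!: sum.cong)
  also have "\<dots> = (\<Sum>i\<in>A. w i * r i)^2 + (\<Sum>i\<in>A. (w i)^2 * r i * (1 - r i))
      + (2 * w j * r j) * (\<Sum>i\<in>A. w i * r i) + (w j)^2 * r j"
    using insert by (simp add: sum.distrib bp_sum1 bp_mom1 flip: sum_distrib_left)
  also have "\<dots> = (\<Sum>i\<in>insert j A. w i * r i)^2 + (\<Sum>i\<in>insert j A. (w i)^2 * r i * (1 - r i))"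
    using insert by (simp add: algebra_simps power2_eq_square)
  finally show ?case .
qed



lemma bin_bp:
  "bin_pmf n \<theta> k = (\<Sum>S\<in>{S. S \<subseteq> {..<n} \<and> card S = k}. bp {..<n} (\<lambda>_. \<theta>) S)"
proof -
  have "(\<Sum>S\<in>{S. S \<subseteq> {..<n} \<and> card S = k}. bp {..<n} (\<lambda>_. \<theta>) S)
      = (\<Sum>S\<in>{S. S \<subseteq> {..<n} \<and> card S = k}. \<theta> ^ k * (1 - \<theta>) ^ (n - k))"
  proof (rule sum.cong)
    fix S assume "S \<in> {S. S \<subseteq> {..<n} \<and> card S = k}"
    then have S: "S \<subseteq> {..<n}" "card S = k" by auto
    then have "card ({..<n} - S) = n - k" by (simp add: card_Diff_subset finite_subset)
    then show "bp {..<n} (\<lambda>_. \<theta>) S = \<theta> ^ k * (1 - \<theta>) ^ (n - k)"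
      using S by (simp add: bp_def)
  qed simp
  also have "\<dots> = real (n choose k) * (\<theta> ^ k * (1 - \<theta>) ^ (n - k))"
    using n_subsets[of "{..<n}" k] by simp
  finally show ?thesis by (simp add: bin_pmf_def mult.assoc)
qed

lemma bp_tv_prod:
  assumes "finite A" "\<forall>i\<in>A. 0 \<le> p i \<and> p i \<le> 1" "\<forall>i\<in>A. 0 \<le> q i \<and> q i \<le> 1"
  shows "(\<Sum>S\<in>Pow A. \<bar>bp A p S - bp A q S\<bar>) \<le> 2 * (\<Sum>i\<in>A. \<bar>p i - q i\<bar>)"
  using assms
proof (induction A rule: finite_induct)
  case empty then show ?case by (simp add: bp_def)
next
  case (insert j A)
  let ?P = "bp A p" and ?Q = "bp A q"
  have pj: "0 \<le> p j" "p j \<le> 1" using insert by auto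
  have "(\<Sum>S\<in>Pow (insert j A). \<bar>bp (insert j A) p S - bp (insert j A) q S\<bar>)
     = (\<Sum>S\<in>Pow A. \<bar>p j * ?P S - q j * ?Q S\<bar> + \<bar>(1 - p j) * ?P S - (1 - q j) * ?Q S\<bar>)"
    using insert by (auto simp: pow_insert_sum bp_ins_in bp_ins_out intro!: sum.cong)
  also have "\<dots> \<le> (\<Sum>S\<in>Pow A. \<bar>?P S - ?Q S\<bar> + 2 * \<bar>p j - q j\<bar> * ?Q S)"
  proof (rule sum_mono)
    fix S assume S: "S \<in> Pow A"
    have Q0: "0 \<le> ?Q S" using bp_nonneg[of A q S] insert S by auto
    have "\<bar>p j * ?P S - q j * ?Q S\<bar> \<le> p j * \<bar>?P S - ?Q S\<bar> + \<bar>p j - q j\<bar> * ?Q S"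
    proof -
      have "p j * ?P S - q j * ?Q S = p j * (?P S - ?Q S) + (p j - q j) * ?Q S" by algebra
      then show ?thesis using pj Q0 by (simp add: abs_mult abs_triangle_ineq[THEN order_trans])
    qed
    moreover have "\<bar>(1 - p j) * ?P S - (1 - q j) * ?Q S\<bar> \<le> (1 - p j) * \<bar>?P S - ?Q S\<bar> + \<bar>p j - q j\<bar> * ?Q S"
    proof -
      have "(1 - p j) * ?P S - (1 - q j) * ?Q S = (1 - p j) * (?P S - ?Q S) + (q j - p j) * ?Q S" by algebra
      then show ?thesis using pj Q0 by (simp add: abs_mult abs_minus_commute abs_triangle_ineq[THEN order_trans])
    qed
    ultimately show "\<bar>p j * ?P S - q j * ?Q S\<bar> + \<bar>(1 - p j) * ?P S - (1 - q j) * ?Q S\<bar>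
        \<le> \<bar>?P S - ?Q S\<bar> + 2 * \<bar>p j - q j\<bar> * ?Q S" by (simp add: algebra_simps)
  qed
  also have "\<dots> = (\<Sum>S\<in>Pow A. \<bar>?P S - ?Q S\<bar>) + 2 * \<bar>p j - q j\<bar>"
    using insert by (simp add: sum.distrib bp_sum1 flip: sum_distrib_left)
  also have "\<dots> \<le> 2 * (\<Sum>i\<in>A. \<bar>p i - q i\<bar>) + 2 * \<bar>p j - q j\<bar>"
    using insert by simp
  also have "\<dots> = 2 * (\<Sum>i\<in>insert j A. \<bar>p i - q i\<bar>)"
    using insert by (simp add: algebra_simps)
  finally show ?case .
qed

lemma tv_bin_le_prod:
  "2 * tv_bin n a b \<le> (\<Sum>S\<in>Pow {..<n}. \<bar>bp {..<n} (\<lambda>_. a) S - bp {..<n} (\<lambda>_. b) S\<bar>)"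
proof -
  let ?h = "\<lambda>S. bp {..<n} (\<lambda>_. a) S - bp {..<n} (\<lambda>_. b) S"
  have "2 * tv_bin n a b = (\<Sum>k\<le>n. \<bar>\<Sum>S\<in>{S. S \<in> Pow {..<n} \<and> card S = k}. ?h S\<bar>)"
    by (simp add: tv_bin_def bin_bp sum_subtractf)
  also have "\<dots> \<le> (\<Sum>k\<le>n. \<Sum>S\<in>{S. S \<in> Pow {..<n} \<and> card S = k}. \<bar>?h S\<bar>)"
    by (intro sum_mono sum_abs)
  also have "\<dots> = (\<Sum>S\<in>Pow {..<n}. \<bar>?h S\<bar>)"
    by (rule sum.group) (auto simp: card_mono[of "{..<n}", simplified])
  finally show ?thesis .
qed

lemma tv_bin_le_delta:
  assumes "0 \<le> a" "a \<le> 1" "0 \<le> b" "b \<le> 1"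
  shows "tv_bin n a b \<le> real n * \<bar>a - b\<bar>"
  using tv_bin_le_prod[of n a b] bp_tv_prod[of "{..<n}" "\<lambda>_. a" "\<lambda>_. b"] assms by simp

lemma tv_bin_le_1:
  assumes "0 \<le> a" "a \<le> 1" "0 \<le> b" "b \<le> 1"
  shows "tv_bin n a b \<le> 1"
proof -
  have "(\<Sum>S\<in>Pow {..<n}. \<bar>bp {..<n} (\<lambda>_. a) S - bp {..<n} (\<lambda>_. b) S\<bar>)
     \<le> (\<Sum>S\<in>Pow {..<n}. bp {..<n} (\<lambda>_. a) S + bp {..<n} (\<lambda>_. b) S)"
  proof (rule sum_mono)
    fix S assume "S \<in> Pow {..<n}"
    then have "0 \<le> bp {..<n} (\<lambda>_. a) S" "0 \<le> bp {..<n} (\<lambda>_. b) S"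
      using bp_nonneg[of "{..<n}" "\<lambda>_. a"] bp_nonneg[of "{..<n}" "\<lambda>_. b"] assms by auto
    then show "\<bar>bp {..<n} (\<lambda>_. a) S - bp {..<n} (\<lambda>_. b) S\<bar> \<le> bp {..<n} (\<lambda>_. a) S + bp {..<n} (\<lambda>_. b) S"
      by arith
  qed
  also have "\<dots> = 2" by (simp add: sum.distrib bp_sum1)
  finally show ?thesis using tv_bin_le_prod[of n a b] by simp
qed



lemma bin_sum1:
  assumes "0 \<le> a" "a \<le> 1"
  shows "(\<Sum>k\<le>n. bin_pmf n a k) = 1"
  using binomial_ring[of a "1 - a" n] by (simp add: bin_pmf_def)

lemma bin_nonneg: "0 \<le> a \<Longrightarrow> a \<le> 1 \<Longrightarrow> 0 \<le> bin_pmf n a k"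
  by (simp add: bin_pmf_def)

lemma bin_sqrt:
  assumes "0 \<le> a" "a \<le> 1" "0 \<le> b" "b \<le> 1"
  shows "sqrt (bin_pmf n a k) * sqrt (bin_pmf n b k)
       = real (n choose k) * sqrt (a * b) ^ k * sqrt ((1 - a) * (1 - b)) ^ (n - k)"
proof -
  have "bin_pmf n a k * bin_pmf n b k
      = (real (n choose k))^2 * (a * b) ^ k * ((1 - a) * (1 - b)) ^ (n - k)"
    unfolding power_mult_distrib by (simp add: bin_pmf_def power2_eq_square mult_ac)
  then have "sqrt (bin_pmf n a k * bin_pmf n b k)
      = sqrt ((real (n choose k))^2) * sqrt (a * b) ^ k * sqrt ((1 - a) * (1 - b)) ^ (n - k)"
    by (simp add: real_sqrt_mult real_sqrt_power)
  then show ?thesis by (simp add: real_sqrt_mult)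
qed

lemma hell_local:
  assumes "0 \<le> a" "a \<le> 1" "0 \<le> b" "b \<le> 1"
  shows "(1 - (sqrt (a * b) + sqrt ((1 - a) * (1 - b)))) * (a * (1 - a) + b * (1 - b)) \<le> (a - b)^2"
proof -
  define x where "x = sqrt a"
  define y where "y = sqrt b"
  define u where "u = sqrt (1 - a)"
  define z where "z = sqrt (1 - b)"
  have pos: "0 \<le> x" "0 \<le> y" "0 \<le> u" "0 \<le> z" using assms by (auto simp: x_def y_def u_def z_def)
  have sq: "x^2 = a" "y^2 = b" "u^2 = 1 - a" "z^2 = 1 - b" using assms by (auto simp: x_def y_def u_def z_def)
  have beta: "sqrt (a * b) + sqrt ((1 - a) * (1 - b)) = x * y + u * z"
    by (simp add: x_def y_def u_def z_def real_sqrt_mult)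
  define h where "h = (x - y)^2 + (u - z)^2"
  have h: "2 * (1 - (x * y + u * z)) = h"
    unfolding h_def using sq by (simp add: power2_eq_square algebra_simps)
  have h0: "0 \<le> h" by (simp add: h_def)
  have d1: "(a - b)^2 = (x - y)^2 * (x + y)^2" using sq by (simp add: power2_eq_square algebra_simps)
  have d2: "(a - b)^2 = (u - z)^2 * (u + z)^2"
  proof -
    have "(u - z)^2 * (u + z)^2 = (u^2 - z^2)^2" by (simp add: power2_eq_square algebra_simps)
    also have "u^2 - z^2 = b - a" using sq by simp
    finally show ?thesis by (simp add: power2_commute)
  qed
  have dummy: True by simp
  have i1: "(x - y)^2 * x^2 \<le> (a - b)^2" unfolding d1
    by (rule mult_left_mono) (use pos in \<open>auto intro!: power_mono\<close>)
  have i2: "(x - y)^2 * y^2 \<le> (a - b)^2" unfolding d1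
    by (rule mult_left_mono) (use pos in \<open>auto intro!: power_mono\<close>)
  have i3: "(u - z)^2 * u^2 \<le> (a - b)^2" unfolding d2
    by (rule mult_left_mono) (use pos in \<open>auto intro!: power_mono\<close>)
  have i4: "(u - z)^2 * z^2 \<le> (a - b)^2" unfolding d2
    by (rule mult_left_mono) (use pos in \<open>auto intro!: power_mono\<close>)
  have "h * (x^2 * u^2) \<le> (a - b)^2 * u^2 + (a - b)^2 * x^2"
  proof -
    have "h * (x^2 * u^2) = ((x - y)^2 * x^2) * u^2 + ((u - z)^2 * u^2) * x^2"
      by (simp add: h_def algebra_simps)
    also have "\<dots> \<le> (a - b)^2 * u^2 + (a - b)^2 * x^2"
      by (intro add_mono mult_right_mono i1 i3) auto
    finally show ?thesis .
  qed
  moreover have "h * (y^2 * z^2) \<le> (a - b)^2 * z^2 + (a - b)^2 * y^2"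
  proof -
    have "h * (y^2 * z^2) = ((x - y)^2 * y^2) * z^2 + ((u - z)^2 * z^2) * y^2"
      by (simp add: h_def algebra_simps)
    also have "\<dots> \<le> (a - b)^2 * z^2 + (a - b)^2 * y^2"
      by (intro add_mono mult_right_mono i2 i4) auto
    finally show ?thesis .
  qed
  ultimately have "h * (x^2 * u^2 + y^2 * z^2) \<le> (a - b)^2 * (u^2 + x^2) + (a - b)^2 * (z^2 + y^2)"
    by (simp add: algebra_simps)
  also have "\<dots> = 2 * (a - b)^2" using sq by simp
  finally have "h * (a * (1 - a) + b * (1 - b)) \<le> 2 * (a - b)^2" using sq by simp
  then show ?thesis unfolding beta using h[symmetric] by (simp add: algebra_simps)
qed

lemma tv_bin_hell:
  assumes "0 \<le> a" "a \<le> 1" "0 \<le> b" "b \<le> 1"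
  shows "(tv_bin n a b)^2 * (real n * (a * (1 - a) + b * (1 - b))) \<le> 2 * (real n * (a - b))^2"
proof -
  define P where "P = bin_pmf n a"
  define Q where "Q = bin_pmf n b"
  define \<beta> where "\<beta> = sqrt (a * b) + sqrt ((1 - a) * (1 - b))"
  have b0: "0 \<le> \<beta>" using assms by (simp add: \<beta>_def)
  have P0: "\<And>k. 0 \<le> P k" and Q0: "\<And>k. 0 \<le> Q k" using assms by (auto simp: P_def Q_def bin_nonneg)
  have sP: "(\<Sum>k\<le>n. P k) = 1" and sQ: "(\<Sum>k\<le>n. Q k) = 1"
    using assms by (auto simp: P_def Q_def bin_sum1)
  have sPQ: "(\<Sum>k\<le>n. sqrt (P k) * sqrt (Q k)) = \<beta> ^ n"
    using assms binomial_ring[of "sqrt (a * b)" "sqrt ((1 - a) * (1 - b))" n]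
    by (simp add: P_def Q_def bin_sqrt \<beta>_def)
  have e1: "(\<Sum>k\<le>n. (sqrt (P k) - sqrt (Q k))^2) = 2 - 2 * \<beta> ^ n"
  proof -
    have "(\<Sum>k\<le>n. (sqrt (P k) - sqrt (Q k))^2) = (\<Sum>k\<le>n. P k + Q k - 2 * (sqrt (P k) * sqrt (Q k)))"
      by (rule sum.cong) (use P0 Q0 in \<open>auto simp: power2_eq_square algebra_simps\<close>)
    also have "\<dots> = 2 - 2 * \<beta> ^ n"
      by (simp add: sum_subtractf sum.distrib sP sQ sPQ flip: sum_distrib_left)
    finally show ?thesis .
  qed
  have e2: "(\<Sum>k\<le>n. (sqrt (P k) + sqrt (Q k))^2) = 2 + 2 * \<beta> ^ n"
  proof -
    have "(\<Sum>k\<le>n. (sqrt (P k) + sqrt (Q k))^2) = (\<Sum>k\<le>n. P k + Q k + 2 * (sqrt (P k) * sqrt (Q k)))"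
      by (rule sum.cong) (use P0 Q0 in \<open>auto simp: power2_eq_square algebra_simps\<close>)
    also have "\<dots> = 2 + 2 * \<beta> ^ n"
      by (simp add: sum.distrib sP sQ sPQ flip: sum_distrib_left)
    finally show ?thesis .
  qed
  have bn1: "\<beta> ^ n \<le> 1"
  proof -
    have "0 \<le> (\<Sum>k\<le>n. (sqrt (P k) - sqrt (Q k))^2)" by (rule sum_nonneg) simp
    then show ?thesis using e1 by simp
  qed
  have cs: "(\<Sum>k\<le>n. \<bar>sqrt (P k) - sqrt (Q k)\<bar> * (sqrt (P k) + sqrt (Q k)))^2
      \<le> (\<Sum>k\<le>n. (\<bar>sqrt (P k) - sqrt (Q k)\<bar>)^2) * (\<Sum>k\<le>n. (sqrt (P k) + sqrt (Q k))^2)"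
    by (rule Cauchy_Schwarz_ineq_sum)
  have "(\<Sum>k\<le>n. \<bar>sqrt (P k) - sqrt (Q k)\<bar> * (sqrt (P k) + sqrt (Q k))) = (\<Sum>k\<le>n. \<bar>P k - Q k\<bar>)"
  proof (rule sum.cong)
    fix k
    have "\<bar>sqrt (P k) - sqrt (Q k)\<bar> * (sqrt (P k) + sqrt (Q k)) = \<bar>(sqrt (P k) - sqrt (Q k)) * (sqrt (P k) + sqrt (Q k))\<bar>"
      using P0[of k] Q0[of k] by (simp add: abs_mult)
    also have "(sqrt (P k) - sqrt (Q k)) * (sqrt (P k) + sqrt (Q k)) = P k - Q k"
      using P0[of k] Q0[of k] by (simp add: algebra_simps)
    finally show "\<bar>sqrt (P k) - sqrt (Q k)\<bar> * (sqrt (P k) + sqrt (Q k)) = \<bar>P k - Q k\<bar>" .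
  qed simp
  then have "(2 * tv_bin n a b)^2 \<le> (2 - 2 * \<beta> ^ n) * (2 + 2 * \<beta> ^ n)"
    using cs e1 e2 by (simp add: tv_bin_def P_def Q_def)
  also have "\<dots> \<le> (2 - 2 * \<beta> ^ n) * 4"
    using bn1 by (intro mult_left_mono) auto
  finally have t1: "(tv_bin n a b)^2 \<le> 2 * (1 - \<beta> ^ n)" by (simp add: power2_eq_square)
  have "1 + real n * (\<beta> - 1) \<le> (1 + (\<beta> - 1)) ^ n"
    by (rule Bernoulli_inequality) (use b0 in simp)
  then have t2: "1 - \<beta> ^ n \<le> real n * (1 - \<beta>)" by (simp add: algebra_simps)
  have V0: "0 \<le> real n * (a * (1 - a) + b * (1 - b))" using assms by simp
  have "(tv_bin n a b)^2 * (real n * (a * (1 - a) + b * (1 - b)))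
      \<le> (2 * (real n * (1 - \<beta>))) * (real n * (a * (1 - a) + b * (1 - b)))"
    by (rule mult_right_mono) (use t1 t2 V0 in auto)
  also have "\<dots> = 2 * real n * real n * ((1 - \<beta>) * (a * (1 - a) + b * (1 - b)))"
    by (simp add: algebra_simps)
  also have "\<dots> \<le> 2 * real n * real n * (a - b)^2"
    by (rule mult_left_mono) (use hell_local[OF assms] in \<open>auto simp: \<beta>_def\<close>)
  also have "\<dots> = 2 * (real n * (a - b))^2" by (simp add: power2_eq_square)
  finally show ?thesis .
qed



lemma phi_step:
  fixes L m x d :: real
  assumes L: "L > 1"
  defines "w \<equiv> (if 0 \<le> d then 1 else -1 :: real)"
  defines "\<phi> \<equiv> (\<lambda>x. max (-1) (min 1 ((x - m) / L)))"
  shows "(\<bar>d\<bar> / L) * (1 - (x - m)^2 / (L - 1)^2) \<le> d * (\<phi> (x + w) - \<phi> x)"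
proof (cases "\<bar>x - m\<bar> \<le> L - 1")
  case True
  have a1: "-1 \<le> (x - m) / L" "(x - m) / L \<le> 1" using True L by (auto simp: field_simps abs_le_iff)
  have a2: "-1 \<le> (x + w - m) / L" "(x + w - m) / L \<le> 1" using True L by (auto simp: w_def field_simps abs_le_iff)
  have "\<phi> (x + w) - \<phi> x = w / L" using a1 a2 by (simp add: \<phi>_def diff_divide_distrib add_divide_distrib)
  then have "d * (\<phi> (x + w) - \<phi> x) = \<bar>d\<bar> / L" by (simp add: w_def)
  moreover have "0 \<le> (x - m)^2 / (L - 1)^2" by simp
  moreover have "0 \<le> \<bar>d\<bar> / L" using L by simp
  ultimately have "(\<bar>d\<bar> / L) * (1 - (x - m)^2 / (L - 1)^2) \<le> (\<bar>d\<bar> / L) * 1"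
    by (intro mult_left_mono) auto
  then show ?thesis using \<open>d * (\<phi> (x + w) - \<phi> x) = \<bar>d\<bar> / L\<close> by simp
next
  case False
  then have "(L - 1)^2 < (x - m)^2" using L
    by (metis abs_of_nonneg abs_le_square_iff diff_ge_0_iff_ge less_eq_real_def linorder_not_le)
  then have "1 - (x - m)^2 / (L - 1)^2 \<le> 0" using L by (simp add: field_simps)
  moreover have "0 \<le> \<bar>d\<bar> / L" using L by simp
  ultimately have "(\<bar>d\<bar> / L) * (1 - (x - m)^2 / (L - 1)^2) \<le> 0" by (rule mult_nonneg_nonpos[rotated])
  moreover have "0 \<le> d * (\<phi> (x + w) - \<phi> x)"
  proof (cases "0 \<le> d")
    case True
    have "(x - m) / L \<le> (x + 1 - m) / L" using L by (simp add: divide_right_mono)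
    then have "\<phi> x \<le> \<phi> (x + w)" using True by (simp add: \<phi>_def w_def)
    then show ?thesis using True by simp
  next
    case False
    have "(x - 1 - m) / L \<le> (x - m) / L" using L by (simp add: divide_right_mono)
    then have "\<phi> (x + w) \<le> \<phi> x" using False by (simp add: \<phi>_def w_def)
    then show ?thesis using False by (simp add: mult_nonpos_nonpos)
  qed
  ultimately show ?thesis by linarith
qed



lemma aux_abs: fixes a b Q X D P :: real
  assumes "\<bar>a - b\<bar> \<le> 1" "b - Q = X" "0 \<le> X" "X \<le> D" "P - Q = D"
  shows "\<bar>a - (P + Q) / 2\<bar> \<le> D / 2 + 1"
  using assms by (simp add: abs_le_iff field_simps)

lemma tv_ber_lower:
  fixes n :: nat and p q :: "nat \<Rightarrow> real" and s :: real
  assumes p: "\<forall>i<n. 0 \<le> p i \<and> p i \<le> 1" and q: "\<forall>i<n. 0 \<le> q i \<and> q i \<le> 1"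
    and s0: "0 \<le> s" and sV: "(\<Sum>i<n. p i * (1 - p i) + q i * (1 - q i)) \<le> s^2"
  shows "(\<Sum>i<n. \<bar>p i - q i\<bar>) \<le> 4 * (3 + 2 * s + (\<Sum>i<n. \<bar>p i - q i\<bar>)) * tv_ber n p q"
proof -
  define D where "D = (\<Sum>i<n. \<bar>p i - q i\<bar>)"
  define L where "L = 3 + 2 * s + D"
  define w where "w = (\<lambda>i. if 0 \<le> p i - q i then 1 else -1 :: real)"
  define m where "m = ((\<Sum>i<n. w i * p i) + (\<Sum>i<n. w i * q i)) / 2"
  define \<phi> where "\<phi> = (\<lambda>x. max (-1) (min 1 ((x - m) / L)))"
  define g where "g = (\<lambda>S. \<phi> (\<Sum>i\<in>S. w i))"
  define r where "r = (\<lambda>j i. if i < j then q i else p i)"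
  define T where "T = (\<lambda>j. \<Sum>S\<in>Pow {..<n}. g S * bp {..<n} (r j) S)"
  have D0: "0 \<le> D" unfolding D_def by (rule sum_nonneg) simp
  have L1: "1 < L" using D0 s0 by (simp add: L_def)
  have r01: "\<And>j i. i < n \<Longrightarrow> 0 \<le> r j i \<and> r j i \<le> 1" using p q by (simp add: r_def)
  have wd: "\<And>i. w i * (p i - q i) = \<bar>p i - q i\<bar>" by (simp add: w_def)
  have w2: "\<And>i. (w i)^2 = 1" by (simp add: w_def)
  have wabs: "\<And>i. \<bar>w i\<bar> = 1" by (simp add: w_def)
  have muD: "(\<Sum>i<n. w i * p i) - (\<Sum>i<n. w i * q i) = D"
  proof -
    have "(\<Sum>i<n. w i * p i) - (\<Sum>i<n. w i * q i) = (\<Sum>i<n. w i * (p i - q i))"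
      by (simp add: right_diff_distrib sum_subtractf)
    then show ?thesis unfolding D_def wd .
  qed
  have key: "\<bar>p j - q j\<bar> / (2 * L) \<le> T j - T (Suc j)" if j: "j < n" for j
  proof -
    define A' where "A' = {..<n} - {j}"
    have fA: "finite A'" and jA: "j \<notin> A'" and ins: "insert j A' = {..<n}" and sub: "A' \<subseteq> {..<n}"
      using j by (auto simp: A'_def)
    define \<rho> where "\<rho> = bp A' (r j)"
    define t where "t = (\<lambda>S. \<Sum>i\<in>S. w i)"
    have rjj: "r j j = p j" "r (Suc j) j = q j" by (auto simp: r_def)
    have rho_eq: "bp A' (r (Suc j)) S = \<rho> S" if "S \<subseteq> A'" for S
      unfolding \<rho>_def by (rule bp_cong) (use that in \<open>auto simp: A'_def r_def\<close>)
    have Tj: "T j = (\<Sum>S\<in>Pow A'. g (insert j S) * (p j * \<rho> S) + g S * ((1 - p j) * \<rho> S))"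
      unfolding T_def ins[symmetric] pow_insert_sum[OF fA jA]
      by (rule sum.cong) (use fA jA in \<open>auto simp: bp_ins_in bp_ins_out rjj \<rho>_def\<close>)
    have TSj: "T (Suc j) = (\<Sum>S\<in>Pow A'. g (insert j S) * (q j * \<rho> S) + g S * ((1 - q j) * \<rho> S))"
      unfolding T_def ins[symmetric] pow_insert_sum[OF fA jA]
      by (rule sum.cong) (use fA jA in \<open>auto simp: bp_ins_in bp_ins_out rjj rho_eq\<close>)
    have diff: "T j - T (Suc j) = (\<Sum>S\<in>Pow A'. \<rho> S * ((p j - q j) * (\<phi> (t S + w j) - \<phi> (t S))))"
      unfolding Tj TSj sum_subtractf[symmetric]
    proof (rule sum.cong)
      fix S assume "S \<in> Pow A'"
      then have "g (insert j S) = \<phi> (t S + w j)" "g S = \<phi> (t S)"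
        using sum_ins_sub[OF fA jA, of S w] by (auto simp: g_def t_def add.commute)
      then show "g (insert j S) * (p j * \<rho> S) + g S * ((1 - p j) * \<rho> S) -
          (g (insert j S) * (q j * \<rho> S) + g S * ((1 - q j) * \<rho> S)) =
          \<rho> S * ((p j - q j) * (\<phi> (t S + w j) - \<phi> (t S)))"
        by (simp add: algebra_simps)
    qed simp
    have rho0: "\<And>S. S \<in> Pow A' \<Longrightarrow> 0 \<le> \<rho> S"
      unfolding \<rho>_def by (rule bp_nonneg) (use r01 sub in auto)
    have rho1: "(\<Sum>S\<in>Pow A'. \<rho> S) = 1" unfolding \<rho>_def by (rule bp_sum1[OF fA])
    define E where "E = (\<Sum>S\<in>Pow A'. \<rho> S * (t S - m)^2)"
    define \<mu> where "\<mu> = (\<Sum>i\<in>A'. w i * r j i)"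
    define \<sigma> where "\<sigma> = (\<Sum>i\<in>A'. (w i)^2 * r j i * (1 - r j i))"
    have Eeq: "E = (\<mu> - m)^2 + \<sigma>"
    proof -
      have "E = (\<Sum>S\<in>Pow A'. \<rho> S * (t S)^2 - (2 * m) * (\<rho> S * t S) + m^2 * \<rho> S)"
        unfolding E_def by (rule sum.cong) (simp_all add: power2_eq_square algebra_simps)
      also have "\<dots> = (\<Sum>S\<in>Pow A'. \<rho> S * (t S)^2) - 2 * m * (\<Sum>S\<in>Pow A'. \<rho> S * t S) + m^2 * (\<Sum>S\<in>Pow A'. \<rho> S)"
        by (simp add: sum.distrib sum_subtractf sum_distrib_left)
      also have "\<dots> = (\<mu> - m)^2 + \<sigma>"
        unfolding rho1 \<rho>_def t_def bp_mom2[OF fA] bp_mom1[OF fA] \<mu>_def[symmetric] \<sigma>_def[symmetric]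
        by (simp add: power2_eq_square algebra_simps bp_sum1[OF fA])
      finally show ?thesis .
    qed
    have sig: "\<sigma> \<le> s^2"
    proof -
      have "\<sigma> = (\<Sum>i\<in>A'. r j i * (1 - r j i))" by (simp add: \<sigma>_def w2)
      also have "\<dots> \<le> (\<Sum>i<n. r j i * (1 - r j i))"
        by (rule sum_mono2) (use sub r01 in auto)
      also have "\<dots> \<le> (\<Sum>i<n. p i * (1 - p i) + q i * (1 - q i))"
        by (rule sum_mono) (use p q in \<open>auto simp: r_def\<close>)
      finally show ?thesis using sV by simp
    qed
    have mu_bd: "\<bar>\<mu> - m\<bar> \<le> D / 2 + 1"
    proof -
      define \<mu>f where "\<mu>f = (\<Sum>i<n. w i * r j i)"
      have "\<mu>f = w j * r j j + \<mu>" unfolding \<mu>f_def \<mu>_def ins[symmetric] using fA jA by simp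
      then have e1: "\<bar>\<mu> - \<mu>f\<bar> \<le> 1" using r01[OF j] by (simp add: abs_mult wabs)
      have e2: "\<mu>f - (\<Sum>i<n. w i * q i) = (\<Sum>i<n. w i * (r j i - q i))"
        by (simp add: \<mu>f_def right_diff_distrib sum_subtractf)
      have e3: "0 \<le> (\<Sum>i<n. w i * (r j i - q i))"
        by (rule sum_nonneg) (auto simp: r_def w_def)
      have e4: "(\<Sum>i<n. w i * (r j i - q i)) \<le> D"
        unfolding D_def by (rule sum_mono) (auto simp: r_def w_def)
      show ?thesis unfolding m_def by (rule aux_abs[OF e1 e2 e3 e4 muD])
    qed
    have E_bd: "2 * E \<le> (L - 1)^2"
    proof -
      have "(\<mu> - m)^2 \<le> (D / 2 + 1)^2"
        using mu_bd abs_le_square_iff[of "\<mu> - m" "D/2 + 1"] D0 by simp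
      then have "2 * E \<le> 2 * (D / 2 + 1)^2 + 2 * s^2" using Eeq sig by simp
      also have "\<dots> \<le> (L - 1)^2" using D0 s0 by (simp add: L_def power2_eq_square algebra_simps)
      finally show ?thesis .
    qed
    have "(\<Sum>S\<in>Pow A'. \<rho> S * ((\<bar>p j - q j\<bar> / L) * (1 - (t S - m)^2 / (L - 1)^2)))
        \<le> (\<Sum>S\<in>Pow A'. \<rho> S * ((p j - q j) * (\<phi> (t S + w j) - \<phi> (t S))))"
      by (rule sum_mono, rule mult_left_mono)
        (use rho0 phi_step[OF L1, of "p j - q j" "t _" m] in \<open>auto simp: \<phi>_def w_def\<close>)
    also have "\<dots> = T j - T (Suc j)" by (simp add: diff)
    moreover have "(\<Sum>S\<in>Pow A'. \<rho> S * ((\<bar>p j - q j\<bar> / L) * (1 - (t S - m)^2 / (L - 1)^2)))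
        = (\<bar>p j - q j\<bar> / L) * (1 - E / (L - 1)^2)"
    proof -
      define c where "c = \<bar>p j - q j\<bar> / L"
      define K where "K = (L - 1)^2"
      have "(\<Sum>S\<in>Pow A'. \<rho> S * (c * (1 - (t S - m)^2 / K)))
          = (\<Sum>S\<in>Pow A'. c * \<rho> S - (c / K) * (\<rho> S * (t S - m)^2))"
        by (rule sum.cong) (auto simp: algebra_simps)
      also have "\<dots> = c * (\<Sum>S\<in>Pow A'. \<rho> S) - (c / K) * E"
        by (simp add: sum_subtractf E_def sum_distrib_left)
      also have "\<dots> = c * (1 - E / K)" by (simp add: rho1 algebra_simps)
      finally show ?thesis by (simp add: c_def K_def)
    qed
    ultimately have X: "(\<bar>p j - q j\<bar> / L) * (1 - E / (L - 1)^2) \<le> T j - T (Suc j)" by simp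
    have h2: "1 / 2 \<le> 1 - E / (L - 1)^2" using E_bd L1 by (simp add: field_simps)
    have h3: "0 \<le> \<bar>p j - q j\<bar> / L" using L1 by simp
    have "(\<bar>p j - q j\<bar> / L) * (1 / 2) \<le> (\<bar>p j - q j\<bar> / L) * (1 - E / (L - 1)^2)"
      by (rule mult_left_mono[OF h2 h3])
    with X show ?thesis by simp
  qed
  have "D / (2 * L) = (\<Sum>j<n. \<bar>p j - q j\<bar> / (2 * L))" by (simp add: D_def sum_divide_distrib)
  also have "\<dots> \<le> (\<Sum>j<n. T j - T (Suc j))" by (rule sum_mono) (use key in auto)
  also have "\<dots> = T 0 - T n" by (rule sum_lessThan_telescope')
  also have "\<dots> = (\<Sum>S\<in>Pow {..<n}. g S * (bp {..<n} p S - bp {..<n} q S))"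
  proof -
    have "r 0 = p" by (simp add: r_def)
    moreover have "\<And>S. S \<in> Pow {..<n} \<Longrightarrow> bp {..<n} (r n) S = bp {..<n} q S"
      by (rule bp_cong) (auto simp: r_def)
    ultimately show ?thesis
      unfolding T_def by (simp add: right_diff_distrib sum_subtractf)
  qed
  also have "\<dots> \<le> (\<Sum>S\<in>Pow {..<n}. \<bar>bp {..<n} p S - bp {..<n} q S\<bar>)"
  proof (rule sum_mono)
    fix S
    have "\<bar>g S\<bar> \<le> 1" by (simp add: g_def \<phi>_def)
    then have "g S * (bp {..<n} p S - bp {..<n} q S) \<le> 1 * \<bar>bp {..<n} p S - bp {..<n} q S\<bar>"
    proof -
      have "g S * (bp {..<n} p S - bp {..<n} q S) \<le> \<bar>g S\<bar> * \<bar>bp {..<n} p S - bp {..<n} q S\<bar>"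
        by (metis abs_ge_self abs_mult)
      also have "\<dots> \<le> 1 * \<bar>bp {..<n} p S - bp {..<n} q S\<bar>"
        by (rule mult_right_mono) (use \<open>\<bar>g S\<bar> \<le> 1\<close> in auto)
      finally show ?thesis .
    qed
    then show "g S * (bp {..<n} p S - bp {..<n} q S) \<le> \<bar>bp {..<n} p S - bp {..<n} q S\<bar>" by simp
  qed
  also have "\<dots> = 2 * tv_ber n p q" by (simp add: tv_ber_def ber_prod_bp)
  finally have "D / (2 * L) \<le> 2 * tv_ber n p q" .
  then have "D \<le> 4 * L * tv_ber n p q" using L1 by (simp add: field_simps)
  then show ?thesis by (simp add: L_def D_def)
qed



lemma var_bound:
  fixes p :: "nat \<Rightarrow> real"
  assumes "n \<ge> 1"
  shows "(\<Sum>i<n. p i * (1 - p i)) \<le> real n * ((\<Sum>i<n. p i) / real n * (1 - (\<Sum>i<n. p i) / real n))"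
proof -
  define P where "P = (\<Sum>i<n. p i)"
  have n0: "real n > 0" using assms by simp
  have cs: "P^2 \<le> (\<Sum>i<n. (p i)^2) * real n"
    using sum_squared_le_sum_of_squares[of p "{..<n}"] by (simp add: P_def)
  have "(\<Sum>i<n. p i * (1 - p i)) = P - (\<Sum>i<n. (p i)^2)"
    by (simp add: P_def algebra_simps power2_eq_square sum_subtractf)
  also have "\<dots> \<le> P - P^2 / real n" using cs n0 by (simp add: field_simps)
  also have "\<dots> = real n * (P / real n * (1 - P / real n))"
    using n0 by (simp add: field_simps power2_eq_square)
  finally show ?thesis by (simp add: P_def)
qed

theorem theorem5:
  fixes n :: nat and p q :: "nat \<Rightarrow> real"
  assumes "n \<ge> 1"
    and "\<forall>i<n. 0 \<le> p i \<and> p i \<le> 1"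
    and "\<forall>i<n. 0 \<le> q i \<and> q i \<le> 1"
  shows "tv_ber n p q \<ge> (1 / (48 * C_BCV)) *
           tv_bin n ((\<Sum>i<n. p i) / real n) ((\<Sum>i<n. q i) / real n)"
proof -
  define a where "a = (\<Sum>i<n. p i) / real n"
  define b where "b = (\<Sum>i<n. q i) / real n"
  define A where "A = tv_ber n p q"
  define B where "B = tv_bin n a b"
  define D where "D = (\<Sum>i<n. \<bar>p i - q i\<bar>)"
  define W where "W = real n * (a * (1 - a) + b * (1 - b))"
  define s where "s = sqrt W"
  have n0: "real n > 0" using assms(1) by simp
  have pa: "(\<Sum>i<n. p i) = real n * a" and qb: "(\<Sum>i<n. q i) = real n * b"
    using n0 by (simp_all add: a_def b_def)
  have "0 \<le> (\<Sum>i<n. p i)" by (rule sum_nonneg) (use assms(2) in auto)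
  moreover have "(\<Sum>i<n. p i) \<le> (\<Sum>i<n. 1)" by (rule sum_mono) (use assms(2) in auto)
  ultimately have a01: "0 \<le> a" "a \<le> 1" using n0 by (auto simp: a_def field_simps)
  have "0 \<le> (\<Sum>i<n. q i)" by (rule sum_nonneg) (use assms(3) in auto)
  moreover have "(\<Sum>i<n. q i) \<le> (\<Sum>i<n. 1)" by (rule sum_mono) (use assms(3) in auto)
  ultimately have b01: "0 \<le> b" "b \<le> 1" using n0 by (auto simp: b_def field_simps)
  have W0: "0 \<le> W" using a01 b01 by (simp add: W_def)
  have s0: "0 \<le> s" and s2: "s^2 = W" using W0 by (auto simp: s_def)
  have D0: "0 \<le> D" unfolding D_def by (rule sum_nonneg) simp
  have Delta: "\<bar>real n * (a - b)\<bar> \<le> D"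
  proof -
    have "real n * (a - b) = (\<Sum>i<n. p i - q i)" by (simp add: pa qb sum_subtractf algebra_simps)
    then show ?thesis unfolding D_def by (simp add: sum_abs)
  qed
  have V: "(\<Sum>i<n. p i * (1 - p i) + q i * (1 - q i)) \<le> s^2"
  proof -
    have "(\<Sum>i<n. p i * (1 - p i) + q i * (1 - q i)) = (\<Sum>i<n. p i * (1 - p i)) + (\<Sum>i<n. q i * (1 - q i))"
      by (simp add: sum.distrib)
    also have "\<dots> \<le> real n * (a * (1 - a)) + real n * (b * (1 - b))"
      using var_bound[OF assms(1), of p] var_bound[OF assms(1), of q] unfolding a_def b_def
      by (rule add_mono)
    also have "\<dots> = s^2" by (simp add: s2 W_def algebra_simps)
    finally show ?thesis .
  qed
  have low: "D \<le> 4 * (3 + 2 * s + D) * A"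
    using tv_ber_lower[OF assms(2) assms(3) s0 V] by (simp add: D_def A_def)
  have B1: "B \<le> 1" using tv_bin_le_1[OF a01 b01] by (simp add: B_def)
  have B0: "0 \<le> B" unfolding B_def tv_bin_def by (simp add: sum_nonneg)
  have BD: "B \<le> D"
    using tv_bin_le_delta[OF a01 b01, of n] Delta n0 by (simp add: B_def abs_mult)
  have BW: "B^2 * W \<le> 2 * D^2"
  proof -
    have "B^2 * W \<le> 2 * (real n * (a - b))^2" using tv_bin_hell[OF a01 b01, of n] by (simp add: B_def W_def)
    also have "(real n * (a - b))^2 \<le> D^2"
      using Delta abs_le_square_iff[of "real n * (a - b)" D] D0 by simp
    finally show ?thesis by simp
  qed
  have Bs: "B * s \<le> 3 / 2 * D"
  proof (rule power2_le_imp_le)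
    show "(B * s)^2 \<le> (3 / 2 * D)^2"
    proof -
      have "(B * s)^2 = B^2 * W" using s2 by (simp add: power_mult_distrib)
      also have "\<dots> \<le> 2 * D^2" by (rule BW)
      also have "\<dots> \<le> (3 / 2 * D)^2" by (simp add: power2_eq_square field_simps)
      finally show ?thesis .
    qed
    show "0 \<le> 3 / 2 * D" using D0 by simp
  qed
  have BDD: "B * D \<le> D" using mult_right_mono[OF B1 D0] by simp
  have "B * (4 * (3 + 2 * s + D)) = 12 * B + 8 * (B * s) + 4 * (B * D)" by (simp add: algebra_simps)
  also have "\<dots> \<le> 28 * D" using BD Bs BDD by simp
  also have "\<dots> \<le> 28 * (4 * (3 + 2 * s + D) * A)" using low by simp
  finally have "B * (4 * (3 + 2 * s + D)) \<le> (28 * A) * (4 * (3 + 2 * s + D))" by (simp add: algebra_simps)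
  moreover have "0 < 4 * (3 + 2 * s + D)" using s0 D0 by simp
  ultimately have B28: "B \<le> 28 * A" by simp
  have A0: "0 \<le> A" unfolding A_def tv_ber_def by (simp add: sum_nonneg)
  have C1: "1 \<le> C_BCV"
  proof -
    have "0 \<le> eta_BCV^2" by simp
    then have "1 \<le> 5 / 4 + eta_BCV^2" by linarith
    then show ?thesis unfolding C_BCV_def by simp
  qed
  have "B \<le> 48 * C_BCV * A"
  proof -
    have "28 * A \<le> 48 * C_BCV * A" using C1 A0 by (intro mult_right_mono) auto
    then show ?thesis using B28 by linarith
  qed
  then have "(1 / (48 * C_BCV)) * B \<le> A" using C1 by (simp add: field_simps)
  then show ?thesis by (simp add: A_def B_def a_def b_def)
qed

end
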